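(* Let $2\le m\le n\le\ell<(m-1)(n-1)+1$. Then every typical rank of real $m\times n\times\ell$ tensors is at least $\ell+1$.
   Context: An integer $r>0$ is a typical rank for the format $m\times n\times\ell$ if $\Pr\{\mathrm{rank}(T)=r\}>0$ for a tensor $T\in\mathbb R^{m\times n\times\ell}$ with i.i.d. standard Gaussian entries; rank is the minimal number of rank-one tensors $a\otimes b\otimes c$ summing to $T$. *)

theory Defs
  imports "HOL-Probability.Probability"
begin

text \<open>Real m x n x l tensors are functions on index triples; only the entries
  with indices in {..<m} x {..<n} x {..<l} matter.\<close>

definition tensor_rank :: "nat \<Rightarrow> nat \<Rightarrow> nat \<Rightarrow> (nat \<times> nat \<times> nat \<Rightarrow> real) \<Rightarrow> nat" where
  "tensor_rank m n l T =
     (LEAST r. \<exists>(a::nat \<Rightarrow> nat \<Rightarrow> real) (b::nat \<Rightarrow> nat \<Rightarrow> real) (c::nat \<Rightarrow> nat \<Rightarrow> real).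
        \<forall>i<m. \<forall>j<n. \<forall>k<l. T (i, j, k) = (\<Sum>s<r. a s i * b s j * c s k))"

definition gaussian_tensor_measure :: "nat \<Rightarrow> nat \<Rightarrow> nat \<Rightarrow> (nat \<times> nat \<times> nat \<Rightarrow> real) measure" where
  "gaussian_tensor_measure m n l =
     PiM ({..<m} \<times> {..<n} \<times> {..<l}) (\<lambda>_. density lborel std_normal_density)"

definition typical_rank :: "nat \<Rightarrow> nat \<Rightarrow> nat \<Rightarrow> nat \<Rightarrow> bool" where
  "typical_rank m n l r \<longleftrightarrow> r > 0 \<and>
     measure (gaussian_tensor_measure m n l)
       {T \<in> space (gaussian_tensor_measure m n l). tensor_rank m n l T = r} > 0"

end

theory Submission
  imports Defs
begin

abbreviation "G1 \<equiv> density lborel std_normal_density"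

lemma psf: "product_sigma_finite (\<lambda>_. G1)"
  by (simp add: product_sigma_finite_def prob_space_imp_sigma_finite prob_space_normal_density)

lemma snd_le1: "std_normal_density x \<le> 1"
proof -
  have "exp (- x\<^sup>2 / 2) \<le> 1" by simp
  moreover have "1 \<le> sqrt (2*pi)" using pi_gt3 by (simp add: real_le_rsqrt)
  ultimately have "exp (- x\<^sup>2 / 2) \<le> sqrt (2*pi)" by linarith
  then show ?thesis unfolding std_normal_density_def
    by (simp add: divide_le_eq)
qed

lemma G1_interval: assumes "a \<le> b" shows "emeasure G1 {a..b} \<le> ennreal (b - a)"
proof -
  have "emeasure G1 {a..b} = (\<integral>\<^sup>+ x. ennreal (std_normal_density x) * indicator {a..b} x \<partial>lborel)"
    by (simp add: emeasure_density)
  also have "\<dots> \<le> (\<integral>\<^sup>+ x. indicator {a..b} x \<partial>lborel)"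
    by (intro nn_integral_mono) (auto simp: indicator_def snd_le1)
  also have "\<dots> = ennreal (b - a)" using assms by simp
  finally show ?thesis .
qed

lemma box_measure:
  fixes I :: "(nat\<times>nat\<times>nat) set" and t :: "nat\<times>nat\<times>nat \<Rightarrow> real"
  assumes "finite I" "d \<ge> 0"
  shows "emeasure (PiM I (\<lambda>_. G1)) (PiE I (\<lambda>x. {t x - d .. t x + d})) \<le> ennreal ((2*d) ^ card I)"
proof -
  interpret product_sigma_finite "\<lambda>_. G1" by (rule psf)
  have "emeasure (PiM I (\<lambda>_. G1)) (PiE I (\<lambda>x. {t x - d .. t x + d})) = (\<Prod>x\<in>I. emeasure G1 {t x - d .. t x + d})"
    using assms by (intro emeasure_PiM) auto
  also have "\<dots> \<le> (\<Prod>x\<in>I. ennreal (2*d))"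
  proof (intro prod_mono_ennreal)
    fix x show "emeasure G1 {t x - d..t x + d} \<le> ennreal (2 * d)"
      using G1_interval[of "t x - d" "t x + d"] assms by auto
  qed
  also have "\<dots> = ennreal ((2*d) ^ card I)"
    using assms by (simp add: prod_ennreal ennreal_power)
  finally show ?thesis .
qed

definition Ga :: "nat \<Rightarrow> nat \<Rightarrow> (nat \<Rightarrow> int) set" where
 "Ga m k = {\<alpha> \<in> PiE {..<m} (\<lambda>_. {-int k..int k}). \<exists>i<m. \<alpha> i = int k}"

lemma finite_Ga: "finite (Ga m k)"
  unfolding Ga_def by (rule finite_subset[of _ "PiE {..<m} (\<lambda>_. {-int k..int k})"]) (auto intro: finite_PiE)

lemma card_Ga: "card (Ga m k) \<le> m * (2*k+1)^(m-1)"
proof -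
  let ?S = "\<lambda>_::nat. {-int k..int k}"
  have sub: "Ga m k \<subseteq> (\<Union>i<m. (\<lambda>\<beta>. \<beta>(i := int k)) ` PiE ({..<m}-{i}) ?S)"
  proof
    fix \<alpha> assume "\<alpha> \<in> Ga m k"
    then obtain i where i: "i < m" "\<alpha> i = int k" and a: "\<alpha> \<in> PiE {..<m} ?S" unfolding Ga_def by auto
    have "\<alpha> = (restrict \<alpha> ({..<m}-{i}))(i := int k)"
      using i a by (auto simp: fun_eq_iff PiE_iff extensional_def)
    moreover have "restrict \<alpha> ({..<m}-{i}) \<in> PiE ({..<m}-{i}) ?S" using a by auto
    ultimately show "\<alpha> \<in> (\<Union>i<m. (\<lambda>\<beta>. \<beta>(i := int k)) ` PiE ({..<m}-{i}) ?S)" using i by blast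
  qed
  have "card (Ga m k) \<le> card (\<Union>i<m. (\<lambda>\<beta>. \<beta>(i := int k)) ` PiE ({..<m}-{i}) ?S)"
    by (intro card_mono sub) (auto intro: finite_PiE)
  also have "\<dots> \<le> (\<Sum>i<m. card ((\<lambda>\<beta>. \<beta>(i := int k)) ` PiE ({..<m}-{i}) ?S))"
    by (rule card_UN_le) simp
  also have "\<dots> \<le> (\<Sum>i<m. card (PiE ({..<m}-{i}) ?S))"
    by (intro sum_mono card_image_le) (auto intro: finite_PiE)
  also have "\<dots> = (\<Sum>i<m. (2*k+1)^(m-1))"
  proof (intro sum.cong refl)
    fix i assume "i \<in> {..<m}"
    then have "card ({..<m}-{i}) = m - 1" by simp
    then show "card (PiE ({..<m}-{i}) ?S) = (2*k+1)^(m-1)"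
      by (simp add: card_PiE nat_add_distrib nat_mult_distrib)
  qed
  also have "\<dots> = m * (2*k+1)^(m-1)" by simp
  finally show ?thesis .
qed

lemma normalize_vec:
  fixes u :: "nat \<Rightarrow> real" assumes "m > 0"
  shows "\<exists>u' lam. (\<forall>i<m. u i = lam * u' i) \<and> (\<forall>i<m. \<bar>u' i\<bar> \<le> 1) \<and> (\<exists>i<m. u' i = 1)"
proof (cases "\<forall>i<m. u i = 0")
  case True
  then show ?thesis using assms
    by (intro exI[of _ "\<lambda>i. if i = 0 then 1 else 0"] exI[of _ 0]) auto
next
  case False
  obtain i0 where i0: "i0 < m" "\<forall>j<m. \<bar>u j\<bar> \<le> \<bar>u i0\<bar>"
  proof -
    have "finite ((\<lambda>j. \<bar>u j\<bar>) ` {..<m})" "(\<lambda>j. \<bar>u j\<bar>) ` {..<m} \<noteq> {}" using assms by auto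
    then have "Max ((\<lambda>j. \<bar>u j\<bar>) ` {..<m}) \<in> (\<lambda>j. \<bar>u j\<bar>) ` {..<m}" by (rule Max_in)
    then obtain i where "i < m" "\<bar>u i\<bar> = Max ((\<lambda>j. \<bar>u j\<bar>) ` {..<m})" by auto
    then show ?thesis using that by (metis Max_ge finite_imageI finite_lessThan imageI lessThan_iff)
  qed
  have nz: "u i0 \<noteq> 0" using False i0 by force
  show ?thesis
  proof (intro exI[of _ "\<lambda>i. u i / u i0"] exI[of _ "u i0"] conjI allI impI)
    fix i assume "i < m"
    show "u i = u i0 * (u i / u i0)" using nz by simp
    show "\<bar>u i / u i0\<bar> \<le> 1" using nz i0 \<open>i<m\<close> by (simp add: abs_divide divide_le_eq_1)
  next
    show "\<exists>i<m. u i / u i0 = 1" using i0 nz by auto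
  qed
qed

lemma triple_est:
  fixes a a' b b' c c' R e :: real
  assumes "\<bar>a\<bar> \<le> 1" "\<bar>a'\<bar> \<le> 1" "\<bar>b\<bar> \<le> 1" "\<bar>b'\<bar> \<le> 1" "\<bar>c\<bar> \<le> R" "\<bar>c'\<bar> \<le> R"
    "\<bar>a - a'\<bar> \<le> e" "\<bar>b - b'\<bar> \<le> e" "\<bar>c - c'\<bar> \<le> e"
  shows "\<bar>a*b*c - a'*b'*c'\<bar> \<le> (2*R+1)*e"
proof -
  have e: "e \<ge> 0" using assms(7) by linarith
  have "a*b*c - a'*b'*c' = (a - a')*(b*c) + a'*((b - b')*c) + a'*b'*(c - c')" by (simp add: algebra_simps)
  also have "\<bar>\<dots>\<bar> \<le> \<bar>a - a'\<bar>*(\<bar>b\<bar>*\<bar>c\<bar>) + \<bar>a'\<bar>*(\<bar>b - b'\<bar>*\<bar>c\<bar>) + \<bar>a'\<bar>*\<bar>b'\<bar>*\<bar>c - c'\<bar>"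
    by (simp add: abs_mult[symmetric] abs_triangle_ineq order_trans[OF abs_triangle_ineq add_mono])
  also have "\<dots> \<le> e*(1*R) + 1*(e*R) + 1*1*e"
    using assms e by (intro add_mono mult_mono) (auto intro: mult_mono)
  finally show ?thesis by (simp add: algebra_simps)
qed

lemma floor_est:
  fixes x :: real and k :: nat assumes "k \<ge> 1"
  shows "\<bar>x - real_of_int \<lfloor>real k * x\<rfloor> / real k\<bar> \<le> 1 / real k"
proof -
  have "real_of_int \<lfloor>real k * x\<rfloor> \<le> real k * x" "real k * x < real_of_int \<lfloor>real k * x\<rfloor> + 1" by linarith+
  then have "\<bar>real k * x - real_of_int \<lfloor>real k * x\<rfloor>\<bar> \<le> 1" by linarith
  then have "\<bar>(real k * x - real_of_int \<lfloor>real k * x\<rfloor>) / real k\<bar> \<le> 1 / real k"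
    using assms by (simp add: abs_divide divide_right_mono)
  moreover have "(real k * x - real_of_int \<lfloor>real k * x\<rfloor>) / real k = x - real_of_int \<lfloor>real k * x\<rfloor> / real k"
    using assms by (simp add: field_simps)
  ultimately show ?thesis by simp
qed

definition Iset :: "nat \<Rightarrow> nat \<Rightarrow> nat \<Rightarrow> (nat\<times>nat\<times>nat) set" where
  "Iset m n l = {..<m} \<times> {..<n} \<times> {..<l}"
definition Gc :: "nat \<Rightarrow> nat \<Rightarrow> nat \<Rightarrow> (nat \<Rightarrow> int) set" where
  "Gc l R k = PiE {..<l} (\<lambda>_. {-int (R*k)..int (R*k)})"
definition cen :: "nat\<Rightarrow>nat\<Rightarrow>nat\<Rightarrow>nat \<Rightarrow> (nat\<Rightarrow>nat\<Rightarrow>int) \<times> (nat\<Rightarrow>nat\<Rightarrow>int) \<times> (nat\<Rightarrow>nat\<Rightarrow>int) \<Rightarrow> (nat\<times>nat\<times>nat \<Rightarrow> real)" where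
  "cen m n l k p = (case p of (\<alpha>,\<beta>,\<gamma>) \<Rightarrow> restrict (\<lambda>(i,j,q). \<Sum>s<l. (\<alpha> s i / real k) * (\<beta> s j / real k) * (\<gamma> s q / real k)) (Iset m n l))"
definition Par where
  "Par m n l R k = PiE {..<l} (\<lambda>_. Ga m k) \<times> PiE {..<l} (\<lambda>_. Ga n k) \<times> PiE {..<l} (\<lambda>_. Gc l R k)"
definition dl :: "nat \<Rightarrow> nat \<Rightarrow> nat \<Rightarrow> real" where
  "dl l R k = real l * (2*real R+1) / real k"
definition W where
  "W m n l R k = (\<Union>p\<in>Par m n l R k. PiE (Iset m n l) (\<lambda>x. {cen m n l k p x - dl l R k .. cen m n l k p x + dl l R k}))"
definition Good where
  "Good m n l R = {T \<in> PiE (Iset m n l) (\<lambda>_. UNIV). \<exists>a b c. (\<forall>s<l. \<forall>i<m. \<bar>a s i\<bar> \<le> 1) \<and> (\<forall>s<l. \<exists>i<m. a s i = 1)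
     \<and> (\<forall>s<l. \<forall>j<n. \<bar>b s j\<bar> \<le> 1) \<and> (\<forall>s<l. \<exists>j<n. b s j = 1) \<and> (\<forall>s<l. \<forall>q<l. \<bar>c s q\<bar> \<le> real R)
     \<and> (\<forall>i<m. \<forall>j<n. \<forall>q<l. T (i,j,q) = (\<Sum>s<l. a s i * b s j * c s q))}"

lemma floor_range:
  fixes x :: real and k B :: nat assumes "\<bar>x\<bar> \<le> real B"
  shows "-(real k * real B) \<le> real_of_int \<lfloor>real k * x\<rfloor>" "real_of_int \<lfloor>real k * x\<rfloor> \<le> real k * real B"
proof -
  have h1: "real k * x \<le> real k * B" using assms by (auto intro: mult_left_mono simp: abs_le_iff)
  have "real k * (-B) \<le> real k * x" using assms by (intro mult_left_mono) (auto simp: abs_le_iff)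
  then have h2: "-(real k * B) \<le> real k * x" by simp
  show "real_of_int \<lfloor>real k * x\<rfloor> \<le> real k * B" using h1 by linarith
  have "\<lfloor>-(real k * B)\<rfloor> \<le> \<lfloor>real k * x\<rfloor>" using h2 by (rule floor_mono)
  moreover have "\<lfloor>-(real k * real B)\<rfloor> = - int (k * B)"
    by (metis floor_of_int of_int_minus of_int_of_nat_eq of_nat_mult)
  ultimately show "-(real k * real B) \<le> real_of_int \<lfloor>real k * x\<rfloor>"
    by (metis of_int_le_iff of_int_minus of_int_of_nat_eq of_nat_mult)
qed

lemma Good_W: assumes "k \<ge> 1" shows "Good m n l R \<subseteq> W m n l R k"
proof
  fix T assume "T \<in> Good m n l R"
  then obtain a b c where T: "T \<in> PiE (Iset m n l) (\<lambda>_. UNIV)"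
    and a1: "\<forall>s<l. \<forall>i<m. \<bar>a s i\<bar> \<le> 1" and a2: "\<forall>s<l. \<exists>i<m. a s i = 1"
    and b1: "\<forall>s<l. \<forall>j<n. \<bar>b s j\<bar> \<le> 1" and b2: "\<forall>s<l. \<exists>j<n. b s j = 1"
    and c1: "\<forall>s<l. \<forall>q<l. \<bar>c s q\<bar> \<le> real R"
    and Te: "\<forall>i<m. \<forall>j<n. \<forall>q<l. T (i,j,q) = (\<Sum>s<l. a s i * b s j * c s q)"
    unfolding Good_def by blast
  define rd where "rd = (\<lambda>x::real. \<lfloor>real k * x\<rfloor>)"
  define \<alpha> where "\<alpha> = restrict (\<lambda>s. restrict (\<lambda>i. rd (a s i)) {..<m}) {..<l}"
  define \<beta> where "\<beta> = restrict (\<lambda>s. restrict (\<lambda>i. rd (b s i)) {..<n}) {..<l}"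
  define \<gamma> where "\<gamma> = restrict (\<lambda>s. restrict (\<lambda>i. rd (c s i)) {..<l}) {..<l}"
  have rk: "rd 1 = int k" unfolding rd_def by simp
  have r1: "-int k \<le> rd x \<and> rd x \<le> int k" if "\<bar>x\<bar> \<le> 1" for x
    using floor_range[of x 1 k] that unfolding rd_def by simp
  have rR: "-int (R*k) \<le> rd x \<and> rd x \<le> int (R*k)" if "\<bar>x\<bar> \<le> real R" for x
  proof -
    have "-(real_of_int (int (R*k))) \<le> real_of_int (rd x)" "real_of_int (rd x) \<le> real_of_int (int (R*k))"
      using floor_range[of x R k] that unfolding rd_def by (simp_all add: mult.commute)
    then show ?thesis by linarith
  qed
  have pa: "\<alpha> \<in> PiE {..<l} (\<lambda>_. Ga m k)"
  proof -
    have "restrict (\<lambda>i. rd (a s i)) {..<m} \<in> Ga m k" if sl: "s < l" for s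
    proof -
      obtain i where "i<m" "a s i = 1" using a2 sl by blast
      then show ?thesis unfolding Ga_def using a1 r1 rk sl by (auto simp: PiE_iff intro!: exI[of _ i])
    qed
    then show ?thesis unfolding \<alpha>_def by auto
  qed
  have pb: "\<beta> \<in> PiE {..<l} (\<lambda>_. Ga n k)"
  proof -
    have "restrict (\<lambda>i. rd (b s i)) {..<n} \<in> Ga n k" if sl: "s < l" for s
    proof -
      obtain i where "i<n" "b s i = 1" using b2 sl by blast
      then show ?thesis unfolding Ga_def using b1 r1 rk sl by (auto simp: PiE_iff intro!: exI[of _ i])
    qed
    then show ?thesis unfolding \<beta>_def by auto
  qed
  have pc: "\<gamma> \<in> PiE {..<l} (\<lambda>_. Gc l R k)"
  proof -
    have "restrict (\<lambda>i. rd (c s i)) {..<l} \<in> Gc l R k" if "s < l" for s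
      unfolding Gc_def using c1 rR that by (auto simp: PiE_iff)
    then show ?thesis unfolding \<gamma>_def by auto
  qed
  have par: "(\<alpha>,\<beta>,\<gamma>) \<in> Par m n l R k"
    unfolding Par_def using pa pb pc by auto
  have est: "\<bar>x - real_of_int (rd x) / real k\<bar> \<le> 1 / real k" for x
    unfolding rd_def using floor_est[OF assms] .
  have r1': "\<bar>real_of_int (rd x) / real k\<bar> \<le> 1" if "\<bar>x\<bar> \<le> 1" for x
    using r1[OF that] assms by (simp add: abs_le_iff divide_le_eq le_divide_eq)
  have rR': "\<bar>real_of_int (rd x) / real k\<bar> \<le> real R" if "\<bar>x\<bar> \<le> real R" for x
  proof -
    have "real_of_int (rd x) \<le> real_of_int (int (R*k))" "real_of_int (- int (R*k)) \<le> real_of_int (rd x)"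
      using rR[OF that] by (simp_all only: of_int_le_iff)
    then have "\<bar>real_of_int (rd x)\<bar> \<le> real R * real k" by simp
    then show ?thesis using assms by (simp add: abs_divide divide_le_eq)
  qed
  have "T \<in> PiE (Iset m n l) (\<lambda>x. {cen m n l k (\<alpha>,\<beta>,\<gamma>) x - dl l R k .. cen m n l k (\<alpha>,\<beta>,\<gamma>) x + dl l R k})"
  proof -
    have bd: "\<bar>T x - cen m n l k (\<alpha>,\<beta>,\<gamma>) x\<bar> \<le> dl l R k" if x: "x \<in> Iset m n l" for x
    proof -
      obtain i j q where xe: "x = (i,j,q)" and ijq: "i<m" "j<n" "q<l" using x unfolding Iset_def by auto
      have eq: "T x - cen m n l k (\<alpha>,\<beta>,\<gamma>) x = (\<Sum>s<l. a s i * b s j * c s q - (rd (a s i) / real k) * (rd (b s j) / real k) * (rd (c s q) / real k))"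
      proof -
        have c: "cen m n l k (\<alpha>,\<beta>,\<gamma>) x = (\<Sum>s<l. (\<alpha> s i / real k) * (\<beta> s j / real k) * (\<gamma> s q / real k))"
          using x unfolding cen_def xe by simp
        also have "\<dots> = (\<Sum>s<l. (rd (a s i) / real k) * (rd (b s j) / real k) * (rd (c s q) / real k))"
          by (rule sum.cong) (use ijq in \<open>auto simp: \<alpha>_def \<beta>_def \<gamma>_def\<close>)
        finally have c2: "cen m n l k (\<alpha>,\<beta>,\<gamma>) x = \<dots>" .
        have "T x = (\<Sum>s<l. a s i * b s j * c s q)" using Te ijq unfolding xe by blast
        then show ?thesis unfolding c2 by (simp add: sum_subtractf)
      qed
      have "\<bar>T x - cen m n l k (\<alpha>,\<beta>,\<gamma>) x\<bar> \<le> (\<Sum>s<l. \<bar>a s i * b s j * c s q - (rd (a s i) / real k) * (rd (b s j) / real k) * (rd (c s q) / real k)\<bar>)"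
        unfolding eq by (rule sum_abs)
      also have "\<dots> \<le> (\<Sum>s<l. (2*real R+1) * (1 / real k))"
      proof (intro sum_mono)
        fix s assume "s \<in> {..<l}"
        then have sl: "s < l" by simp
        show "\<bar>a s i * b s j * c s q - (rd (a s i) / real k) * (rd (b s j) / real k) * (rd (c s q) / real k)\<bar> \<le> (2*real R+1) * (1 / real k)"
        proof (rule triple_est)
          show h: "\<bar>a s i\<bar> \<le> 1" "\<bar>b s j\<bar> \<le> 1" "\<bar>c s q\<bar> \<le> real R"
            using sl ijq a1 b1 c1 by auto
          show "\<bar>real_of_int (rd (a s i)) / real k\<bar> \<le> 1" by (rule r1'[OF h(1)])
          show "\<bar>real_of_int (rd (b s j)) / real k\<bar> \<le> 1" by (rule r1'[OF h(2)])
          show "\<bar>real_of_int (rd (c s q)) / real k\<bar> \<le> real R" by (rule rR'[OF h(3)])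
          show "\<bar>a s i - real_of_int (rd (a s i)) / real k\<bar> \<le> 1 / real k"
             "\<bar>b s j - real_of_int (rd (b s j)) / real k\<bar> \<le> 1 / real k"
             "\<bar>c s q - real_of_int (rd (c s q)) / real k\<bar> \<le> 1 / real k" by (rule est)+
        qed
      qed
      also have "\<dots> = dl l R k" unfolding dl_def by simp
      finally show ?thesis .
    qed
    have "T x \<in> {cen m n l k (\<alpha>,\<beta>,\<gamma>) x - dl l R k .. cen m n l k (\<alpha>,\<beta>,\<gamma>) x + dl l R k}" if "x \<in> Iset m n l" for x
      using bd[OF that] by (simp add: abs_le_iff)
    then have "\<forall>x\<in>Iset m n l. T x \<in> {cen m n l k (\<alpha>,\<beta>,\<gamma>) x - dl l R k .. cen m n l k (\<alpha>,\<beta>,\<gamma>) x + dl l R k}" by blast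
    then show ?thesis using T by (simp add: PiE_iff)
  qed
  then show "T \<in> W m n l R k" unfolding W_def by (rule UN_I[OF par])
qed

lemma card_PiE_const: "card (PiE {..<l} (\<lambda>_::nat. X)) = card X ^ l"
  by (simp add: card_PiE)

lemma finite_Gc: "finite (Gc l R k)" unfolding Gc_def by (auto intro: finite_PiE)

lemma card_Gc: "card (Gc l R k) = (2*R*k+1)^l"
  unfolding Gc_def card_PiE_const by (simp add: nat_add_distrib nat_mult_distrib mult.assoc)

lemma finite_Par: "finite (Par m n l R k)"
  unfolding Par_def by (intro finite_cartesian_product finite_PiE finite_Ga finite_Gc finite_lessThan)

lemma card_Par: "card (Par m n l R k) \<le> (m*(2*k+1)^(m-1))^l * (n*(2*k+1)^(n-1))^l * ((2*R*k+1)^l)^l"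
proof -
  have "card (Par m n l R k) = card (Ga m k)^l * card (Ga n k)^l * card (Gc l R k)^l"
    unfolding Par_def by (simp add: card_cartesian_product card_PiE_const)
  also have "\<dots> \<le> (m*(2*k+1)^(m-1))^l * (n*(2*k+1)^(n-1))^l * ((2*R*k+1)^l)^l"
    unfolding card_Gc by (intro mult_le_mono power_mono card_Ga le_refl zero_le)
  finally show ?thesis .
qed

lemma count_bound:
  fixes m n l R k :: nat assumes "k \<ge> 1" "R \<ge> 1"
  shows "(m*(2*k+1)^(m-1))^l * (n*(2*k+1)^(n-1))^l * ((2*R*k+1)^l)^l
     \<le> ((m*3^(m-1))^l * (n*3^(n-1))^l * ((3*R)^l)^l) * k^(l*((m-1)+(n-1)+l))"
proof -
  have k3: "2*k+1 \<le> 3*k" using assms by simp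
  have kR: "2*R*k+1 \<le> 3*R*k" using assms by (simp add: algebra_simps)
  have "(m*(2*k+1)^(m-1))^l * (n*(2*k+1)^(n-1))^l * ((2*R*k+1)^l)^l
     \<le> (m*(3*k)^(m-1))^l * (n*(3*k)^(n-1))^l * ((3*R*k)^l)^l"
    by (intro mult_le_mono power_mono k3 kR le_refl zero_le)
  also have "\<dots> = ((m*3^(m-1))^l * (n*3^(n-1))^l * ((3*R)^l)^l) * k^(l*((m-1)+(n-1)+l))"
    by (simp add: power_mult_distrib power_add power_mult[symmetric] algebra_simps)
  finally show ?thesis .
qed

lemma real_bound:
  fixes m n l R k p N :: nat and K0 C :: real
  assumes "k \<ge> 1" "p < N" "real cb \<le> K0 * real k ^ p" "C \<ge> 0" "K0 \<ge> 0"
  shows "real cb * (C / real k) ^ N \<le> K0 * C ^ N / real k"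
proof -
  have kp: "real k ^ p * real k \<le> real k ^ N"
  proof -
    have "real k ^ p * real k = real k ^ (Suc p)" by simp
    also have "\<dots> \<le> real k ^ N" using assms by (intro power_increasing) auto
    finally show ?thesis .
  qed
  have "real cb * (C / real k) ^ N \<le> K0 * real k ^ p * (C / real k) ^ N"
    using assms by (intro mult_right_mono) auto
  also have "\<dots> = K0 * C ^ N * (real k ^ p / real k ^ N)" by (simp add: power_divide)
  also have "\<dots> \<le> K0 * C ^ N * (1 / real k)"
  proof (intro mult_left_mono)
    show "real k ^ p / real k ^ N \<le> 1 / real k"
      using kp assms by (simp add: divide_simps)
  qed (use assms in auto)
  finally show ?thesis by simp
qed

lemma M_eq: "gaussian_tensor_measure m n l = PiM (Iset m n l) (\<lambda>_. G1)"
  unfolding gaussian_tensor_measure_def Iset_def ..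

lemma space_M: "space (gaussian_tensor_measure m n l) = PiE (Iset m n l) (\<lambda>_. UNIV)"
  by (simp add: M_eq space_PiM)

lemma finite_Iset: "finite (Iset m n l)" unfolding Iset_def by auto
lemma card_Iset: "card (Iset m n l) = m*n*l" unfolding Iset_def by (simp add: card_cartesian_product)

lemma box_sets: "PiE (Iset m n l) (\<lambda>x. {t x - d .. t x + d}) \<in> sets (gaussian_tensor_measure m n l)"
  unfolding M_eq by (intro sets_PiM_I_finite finite_Iset) auto

lemma W_sets: "W m n l R k \<in> sets (gaussian_tensor_measure m n l)"
  unfolding W_def by (intro sets.finite_UN finite_Par box_sets)

lemma W_measure: "emeasure (gaussian_tensor_measure m n l) (W m n l R k)
   \<le> ennreal (real (card (Par m n l R k)) * (2 * dl l R k)^(m*n*l))"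
proof -
  let ?M = "gaussian_tensor_measure m n l"
  let ?B = "\<lambda>p. PiE (Iset m n l) (\<lambda>x. {cen m n l k p x - dl l R k .. cen m n l k p x + dl l R k})"
  have "emeasure ?M (W m n l R k) \<le> (\<Sum>p\<in>Par m n l R k. emeasure ?M (?B p))"
    unfolding W_def by (intro emeasure_subadditive_finite finite_Par) (auto intro: box_sets)
  also have "\<dots> \<le> (\<Sum>p\<in>Par m n l R k. ennreal ((2 * dl l R k)^(m*n*l)))"
  proof (intro sum_mono)
    fix p
    have "dl l R k \<ge> 0" unfolding dl_def by simp
    then show "emeasure ?M (?B p) \<le> ennreal ((2 * dl l R k)^(m*n*l))"
      using box_measure[OF finite_Iset, of "dl l R k" m n l "cen m n l k p"] unfolding M_eq card_Iset by simp
  qed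
  also have "\<dots> = ennreal (real (card (Par m n l R k)) * (2 * dl l R k)^(m*n*l))"
    by (simp add: ennreal_of_nat_eq_real_of_nat ennreal_mult dl_def)
  finally show ?thesis .
qed

definition Z where "Z m n l R = (\<Inter>k. W m n l R (Suc k))"

lemma Z_sets: "Z m n l R \<in> sets (gaussian_tensor_measure m n l)"
  unfolding Z_def by (rule sets.countable_INT) (auto intro: W_sets)

lemma Good_Z: "Good m n l R \<subseteq> Z m n l R"
  unfolding Z_def by (intro INT_greatest Good_W) simp

lemma ennreal_small:
  fixes x :: ennreal assumes "\<And>k::nat. k \<ge> 1 \<Longrightarrow> x \<le> ennreal (K / real k)"
  shows "x = 0"
proof (rule ccontr)
  assume "x \<noteq> 0"
  have "x \<le> ennreal K" using assms[of 1] by simp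
  then obtain y where y: "x = ennreal y" "y \<ge> 0" by (metis ennreal_cases ennreal_le_iff2 top.extremum_uniqueI ennreal_neq_top)
  with \<open>x \<noteq> 0\<close> have ypos: "y > 0" by (cases "y = 0") auto
  obtain k :: nat where k: "real k > K / y" using reals_Archimedean2 by blast
  have k1: "k \<ge> 1"
  proof (rule ccontr)
    assume "\<not> k \<ge> 1" then have "k = 0" by simp
    then have "K < 0" using k ypos by (simp add: divide_less_0_iff)
    then show False using assms[of 1] y ypos by (simp add: ennreal_neg)
  qed
  have "ennreal y \<le> ennreal (K / real k)" using assms[OF k1] y by simp
  moreover have "K / real k < y" using k ypos k1 by (simp add: divide_less_eq field_simps)
  ultimately show False using ypos by (simp add: ennreal_le_iff2 ennreal_le_iff)
qed

lemma Z_null: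
  assumes R: "R \<ge> 1" and pN: "l*((m-1)+(n-1)+l) < m*n*l"
  shows "emeasure (gaussian_tensor_measure m n l) (Z m n l R) = 0"
proof (rule ennreal_small)
  let ?M = "gaussian_tensor_measure m n l"
  define K0 :: real where "K0 = real ((m*3^(m-1))^l * (n*3^(n-1))^l * ((3*R)^l)^l)"
  define C :: real where "C = 2 * real l * (2 * real R + 1)"
  fix k :: nat assume k: "k \<ge> 1"
  have "Z m n l R \<subseteq> W m n l R k"
  proof
    fix x assume "x \<in> Z m n l R"
    then have "x \<in> W m n l R (Suc (k - 1))" unfolding Z_def by blast
    then show "x \<in> W m n l R k" using k by simp
  qed
  then have "emeasure ?M (Z m n l R) \<le> emeasure ?M (W m n l R k)"
    by (intro emeasure_mono W_sets)
  also have "\<dots> \<le> ennreal (real (card (Par m n l R k)) * (2 * dl l R k)^(m*n*l))"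
    by (rule W_measure)
  also have "\<dots> \<le> ennreal (K0 * C ^ (m*n*l) / real k)"
  proof (intro ennreal_leI)
    have "card (Par m n l R k) \<le> ((m*3^(m-1))^l * (n*3^(n-1))^l * ((3*R)^l)^l) * k^(l*((m-1)+(n-1)+l))"
      using card_Par count_bound[OF k R] le_trans by blast
    then have cb: "real (card (Par m n l R k)) \<le> K0 * real k ^ (l*((m-1)+(n-1)+l))"
      unfolding K0_def by (metis of_nat_le_iff of_nat_mult of_nat_power)
    have "2 * dl l R k = C / real k" unfolding dl_def C_def by simp
    then show "real (card (Par m n l R k)) * (2 * dl l R k)^(m*n*l) \<le> K0 * C ^ (m*n*l) / real k"
      using real_bound[OF k pN cb] unfolding C_def K0_def by simp
  qed
  finally show "emeasure ?M (Z m n l R) \<le> ennreal (K0 * C ^ (m*n*l) / real k)" .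
qed

lemma pN_arith:
  fixes m n l :: nat
  assumes "2 \<le> m" "m \<le> n" "n \<le> l" "l < (m - 1) * (n - 1) + 1"
  shows "l*((m-1)+(n-1)+l) < m*n*l"
proof -
  obtain a b where a: "m = Suc a" and b: "n = Suc b" using assms by (metis Suc_le_D le_trans numeral_2_eq_2)
  have "(m-1)+(n-1)+l < m*n" using assms unfolding a b by simp
  moreover have "l > 0" using assms by simp
  ultimately show ?thesis by (simp add: mult.commute)
qed

lemma decode:
  fixes s i j q n l :: nat assumes "j < n" "q < l"
  shows "(s div (n*l) = i \<and> s div l mod n = j \<and> s mod l = q) \<longleftrightarrow> s = i*(n*l) + j*l + q"
proof
  assume h: "s div (n*l) = i \<and> s div l mod n = j \<and> s mod l = q"
  have "s = (s div l)*l + s mod l" by simp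
  also have "s div l = (s div l div n)*n + s div l mod n" by simp
  also have "s div l div n = s div (n*l)" by (simp add: div_mult2_eq mult.commute)
  finally show "s = i*(n*l) + j*l + q" using h by (simp add: algebra_simps)
next
  assume h: "s = i*(n*l) + j*l + q"
  have hs: "s = q + (i*n + j)*l" unfolding h by (simp add: algebra_simps)
  have l0: "l \<noteq> 0" using assms by simp
  have d1: "s div l = i*n + j" unfolding hs using assms l0 by (simp add: div_mult_self1[OF l0])
  have "s mod l = q" unfolding hs using assms by simp
  moreover have "s div l mod n = j" using d1 assms by simp
  moreover have "s div (n*l) = i" using d1 assms by (simp add: div_mult2_eq mult.commute)
  ultimately show "s div (n*l) = i \<and> s div l mod n = j \<and> s mod l = q" by simp
qed

lemma rank_exists:
  "\<exists>r (a::nat\<Rightarrow>nat\<Rightarrow>real) (b::nat\<Rightarrow>nat\<Rightarrow>real) (c::nat\<Rightarrow>nat\<Rightarrow>real).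
        \<forall>i<m. \<forall>j<n. \<forall>q<l. T (i, j, q) = (\<Sum>s<r. a s i * b s j * c s q)"
proof (intro exI allI impI)
  fix i j q assume ijq: "i < m" "j < n" "q < l"
  let ?s0 = "i*(n*l) + j*l + q"
  have s0: "?s0 < m*n*l"
  proof -
    have "j*l + q < j*l + l" using ijq by simp
    also have "\<dots> = Suc j * l" by simp
    also have "\<dots> \<le> n*l" using ijq by (intro mult_le_mono1) simp
    finally have "j*l + q < n*l" .
    then have "?s0 < i*(n*l) + n*l" by simp
    also have "\<dots> = (Suc i)*(n*l)" by simp
    also have "\<dots> \<le> m*(n*l)" using ijq by (intro mult_le_mono1) simp
    finally show ?thesis by (simp add: mult.assoc)
  qed
  have "(\<Sum>s<m*n*l. (if i = s div (n*l) then 1 else 0) * (if j = s div l mod n then 1 else 0) *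
          (if q = s mod l then T (s div (n*l), s div l mod n, q) else 0))
      = (\<Sum>s<m*n*l. if s = ?s0 then T (i,j,q) else (0::real))"
  proof (rule sum.cong[OF refl])
    fix s
    show "(if i = s div (n*l) then 1 else 0) * (if j = s div l mod n then 1 else 0) *
          (if q = s mod l then T (s div (n*l), s div l mod n, q) else 0) = (if s = ?s0 then T (i,j,q) else 0)"
    proof (cases "s = ?s0")
      case True
      then have "s div (n*l) = i" "s div l mod n = j" "s mod l = q" using decode[OF ijq(2,3), of s i] by simp_all
      then show ?thesis using True by simp
    next
      case False
      then have "\<not> (s div (n*l) = i \<and> s div l mod n = j \<and> s mod l = q)" using decode[OF ijq(2,3), of s i] by simp
      then show ?thesis using False by auto
    qed
  qed
  also have "\<dots> = T (i,j,q)" using s0 by simp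
  finally show "T (i, j, q) = (\<Sum>s<m*n*l. (\<lambda>s i. if i = s div (n*l) then 1 else 0) s i *
      (\<lambda>s j. if j = s div l mod n then 1 else 0) s j * (\<lambda>s q. if q = s mod l then T (s div (n*l), s div l mod n, q) else 0) s q)"
    by simp
qed

lemma rank_Good:
  assumes m: "m > 0" and n: "n > 0" and T: "T \<in> PiE (Iset m n l) (\<lambda>_. UNIV)" and rl: "tensor_rank m n l T \<le> l"
  shows "\<exists>R. T \<in> Good m n l (Suc R)"
proof -
  define P where "P = (\<lambda>r. \<exists>(a::nat\<Rightarrow>nat\<Rightarrow>real) (b::nat\<Rightarrow>nat\<Rightarrow>real) (c::nat\<Rightarrow>nat\<Rightarrow>real).
        \<forall>i<m. \<forall>j<n. \<forall>q<l. T (i, j, q) = (\<Sum>s<r. a s i * b s j * c s q))"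
  have ex: "\<exists>r. P r" unfolding P_def by (rule rank_exists)
  have tr: "tensor_rank m n l T = (LEAST r. P r)" unfolding tensor_rank_def P_def ..
  define r where "r = tensor_rank m n l T"
  have "P r" unfolding r_def tr by (rule LeastI_ex[OF ex])
  then obtain a b c where dec: "\<forall>i<m. \<forall>j<n. \<forall>q<l. T (i, j, q) = (\<Sum>s<r. a s i * b s j * c s q)"
    unfolding P_def by blast
  have rl': "r \<le> l" using rl r_def by simp
  have "\<forall>s. \<exists>u' lam. (\<forall>i<m. a s i = lam * u' i) \<and> (\<forall>i<m. \<bar>u' i\<bar> \<le> 1) \<and> (\<exists>i<m. u' i = 1)"
    using normalize_vec[OF m] by blast
  then obtain A LA where An: "\<And>s. (\<forall>i<m. a s i = LA s * A s i) \<and> (\<forall>i<m. \<bar>A s i\<bar> \<le> 1) \<and> (\<exists>i<m. A s i = 1)"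
    by metis
  have "\<forall>s. \<exists>u' lam. (\<forall>i<n. b s i = lam * u' i) \<and> (\<forall>i<n. \<bar>u' i\<bar> \<le> 1) \<and> (\<exists>i<n. u' i = 1)"
    using normalize_vec[OF n] by blast
  then obtain B LB where Bn: "\<And>s. (\<forall>i<n. b s i = LB s * B s i) \<and> (\<forall>i<n. \<bar>B s i\<bar> \<le> 1) \<and> (\<exists>i<n. B s i = 1)"
    by metis
  define C where "C = (\<lambda>s q. if s < r then LA s * LB s * c s q else 0)"
  define R where "R = nat \<lceil>\<Sum>s<l. \<Sum>q<l. \<bar>C s q\<bar>\<rceil>"
  have Cb: "\<bar>C s q\<bar> \<le> real (Suc R)" if "s < l" "q < l" for s q
  proof -
    have "\<bar>C s q\<bar> \<le> (\<Sum>q<l. \<bar>C s q\<bar>)" using that by (intro member_le_sum) auto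
    also have "\<dots> \<le> (\<Sum>s<l. \<Sum>q<l. \<bar>C s q\<bar>)"
      using that by (intro member_le_sum[where f = "\<lambda>s. \<Sum>q<l. \<bar>C s q\<bar>"]) (auto intro: sum_nonneg)
    also have "\<dots> \<le> real R" unfolding R_def by linarith
    finally show ?thesis by simp
  qed
  have eq: "T (i,j,q) = (\<Sum>s<l. A s i * B s j * C s q)" if "i<m" "j<n" "q<l" for i j q
  proof -
    have "(\<Sum>s<l. A s i * B s j * C s q) = (\<Sum>s<r. a s i * b s j * c s q)"
    proof (rule sum.mono_neutral_cong_right)
      show "finite {..<l}" by simp
      show "{..<r} \<subseteq> {..<l}" using rl' by auto
      show "\<forall>s\<in>{..<l} - {..<r}. A s i * B s j * C s q = 0" unfolding C_def by auto
      show "A s i * B s j * C s q = a s i * b s j * c s q" if "s \<in> {..<r}" for s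
        using that An[of s] Bn[of s] \<open>i<m\<close> \<open>j<n\<close> unfolding C_def by (simp add: algebra_simps)
    qed
    then show ?thesis using dec that by simp
  qed
  have g1: "\<forall>s<l. \<forall>i<m. \<bar>A s i\<bar> \<le> 1" using An by blast
  have g2: "\<forall>s<l. \<exists>i<m. A s i = 1" using An by blast
  have g3: "\<forall>s<l. \<forall>i<n. \<bar>B s i\<bar> \<le> 1" using Bn by blast
  have g4: "\<forall>s<l. \<exists>i<n. B s i = 1" using Bn by blast
  have g5: "\<forall>s<l. \<forall>q<l. \<bar>C s q\<bar> \<le> real (Suc R)" using Cb by blast
  have g6: "\<forall>i<m. \<forall>j<n. \<forall>q<l. T (i,j,q) = (\<Sum>s<l. A s i * B s j * C s q)" using eq by blast
  have ex3: "\<exists>a b c. (\<forall>s<l. \<forall>i<m. \<bar>a s i\<bar> \<le> 1) \<and> (\<forall>s<l. \<exists>i<m. a s i = 1)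
     \<and> (\<forall>s<l. \<forall>j<n. \<bar>b s j\<bar> \<le> 1) \<and> (\<forall>s<l. \<exists>j<n. b s j = 1) \<and> (\<forall>s<l. \<forall>q<l. \<bar>c s q\<bar> \<le> real (Suc R))
     \<and> (\<forall>i<m. \<forall>j<n. \<forall>q<l. T (i,j,q) = (\<Sum>s<l. a s i * b s j * c s q))"
    by (rule exI[of _ A], rule exI[of _ B], rule exI[of _ C]) (intro conjI g1 g2 g3 g4 g5 g6)
  have "T \<in> Good m n l (Suc R)"
    unfolding Good_def mem_Collect_eq by (rule conjI[OF T ex3])
  then show ?thesis by blast
qed

theorem mainTheorem10:
  fixes m n l r :: nat
  assumes "2 \<le> m" and "m \<le> n" and "n \<le> l" and "l < (m - 1) * (n - 1) + 1"
    and "typical_rank m n l r"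
  shows "r \<ge> l + 1"
proof (rule ccontr)
  assume "\<not> r \<ge> l + 1"
  then have rl: "r \<le> l" by simp
  let ?M = "gaussian_tensor_measure m n l"
  let ?A = "{T \<in> space ?M. tensor_rank m n l T = r}"
  have pN: "l*((m-1)+(n-1)+l) < m*n*l" using pN_arith assms(1-4) .
  have m0: "m > 0" "n > 0" using assms by auto
  have sub: "?A \<subseteq> (\<Union>R. Z m n l (Suc R))"
  proof
    fix T assume "T \<in> ?A"
    then have T: "T \<in> PiE (Iset m n l) (\<lambda>_. UNIV)" "tensor_rank m n l T \<le> l"
      using rl by (auto simp: space_M)
    obtain R where "T \<in> Good m n l (Suc R)" using rank_Good[OF m0 T] by blast
    then show "T \<in> (\<Union>R. Z m n l (Suc R))" using Good_Z by blast
  qed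
  have "(\<Union>R. Z m n l (Suc R)) \<in> sets ?M" by (intro sets.countable_UN) (auto intro: Z_sets)
  moreover have "emeasure ?M (\<Union>R. Z m n l (Suc R)) = 0"
    by (rule emeasure_UN_eq_0) (auto intro: Z_null[OF _ pN] Z_sets)
  ultimately have "emeasure ?M ?A = 0" using sub by (rule emeasure_eq_0)
  then have "measure ?M ?A = 0" by (simp add: measure_def)
  moreover have "measure ?M ?A > 0" using assms(5) unfolding typical_rank_def by blast
  ultimately show False by simp
qed

end
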